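(* Let $M=(v_1,\dots,v_n)$ be a finite list of nonzero vectors generating $\mathbb{F}_2^3$ such that the multiplicities of the distinct vectors in $M$ have greatest common divisor $1$. Let $\lambda_u=n-\sum_{i=1}^n(-1)^{u\cdot v_i}$ for $u\in\mathbb{F}_2^3\setminus\{0\}$, and let $d_1\le d_2\le\cdots\le d_7$ be the numbers $v_2(\lambda_u)$, $u\ne0$, in increasing order. Let $c_1$ be the order of the largest cyclic factor of the Sylow-$2$ subgroup of $K(G(\mathbb{F}_2^3,M))$. Then $c_1=2^{d_7+1}$ if the $d_i$ are not all equal, and $c_1=2^{d_7}$ if $d_1=d_2=\cdots=d_7$.
   Context: The Cayley graph $G(\mathbb{F}_2^3,M)$ has vertex set $\mathbb{F}_2^3$ and Laplacian $L$ indexed by $\mathbb{F}_2^3$ with $L_{u,u}=n$ and $L_{u,w}=-\#\{i:u+v_i=w\}$ for $u\ne w$; $\operatorname{coker}L\cong\mathbb{Z}\oplus K(G)$ with $K(G)$ finite abelian (the sandpile group). The $\lambda_u$ are the nonzero eigenvalues of $L$. $v_2$ is the $2$-adic valuation. *)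

theory Defs
  imports "HOL-Analysis.Analysis" "HOL-Library.Z2" "HOL-Computational_Algebra.Factorial_Ring"
begin

type_synonym f23 = "bit ^ 3"

definition dotF2 :: "f23 \<Rightarrow> f23 \<Rightarrow> bit" where
  "dotF2 u v = (\<Sum>i\<in>UNIV. u $ i * v $ i)"

definition signF2 :: "f23 \<Rightarrow> f23 \<Rightarrow> int" where
  "signF2 u v = (if dotF2 u v = 0 then 1 else -1)"

definition lam :: "f23 list \<Rightarrow> f23 \<Rightarrow> int" where
  "lam M u = int (length M) - (\<Sum>i<length M. signF2 u (M ! i))"

definition laplacian :: "f23 list \<Rightarrow> f23 \<Rightarrow> f23 \<Rightarrow> int" where
  "laplacian M u w =
     (if u = w then int (length M) else - int (card {i. i < length M \<and> u + M ! i = w}))"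

definition in_image :: "f23 list \<Rightarrow> (f23 \<Rightarrow> int) \<Rightarrow> bool" where
  "in_image M x \<longleftrightarrow> (\<exists>y :: f23 \<Rightarrow> int. \<forall>u. x u = (\<Sum>w\<in>UNIV. laplacian M u w * y w))"

definition coker_ord :: "f23 list \<Rightarrow> (f23 \<Rightarrow> int) \<Rightarrow> nat" where
  "coker_ord M x = (if \<exists>m>0. in_image M (\<lambda>u. int m * x u)
                    then (LEAST m. m > 0 \<and> in_image M (\<lambda>u. int m * x u)) else 0)"

text \<open>Representatives of the Sylow-2 subgroup of the sandpile group K(G)
  (= the 2-power torsion of coker L).\<close>
definition sylow2_reps :: "f23 list \<Rightarrow> (f23 \<Rightarrow> int) set" where
  "sylow2_reps M = {x. \<exists>k::nat. in_image M (\<lambda>u. 2 ^ k * x u)}"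

text \<open>Order of the largest cyclic factor of the Sylow-2 subgroup of K(G), i.e. the maximal
  order of an element of that finite abelian 2-group.\<close>
definition sylow2_largest_cyclic :: "f23 list \<Rightarrow> nat" where
  "sylow2_largest_cyclic M = Max (coker_ord M ` sylow2_reps M)"

end

theory Submission
  imports Defs
begin

lemma bit_UNIV: "(UNIV :: bit set) = {0,1}" by (auto intro: bit.exhaust)
instance bit :: finite
  by standard (simp add: bit_UNIV)

lemma card_f23: "CARD(f23) = 8" by (simp add: bit_UNIV numeral_eq_Suc)

lemma bit_add_self [simp]: "(a::bit) + a = 0"
  by (cases a) auto

lemma f23_add_self [simp]: "(x::f23) + x = 0"
  by (simp add: vec_eq_iff)

lemma f23_add_eq0: "(x::f23) + y = 0 \<longleftrightarrow> x = y"
  by (metis add.assoc add_0 f23_add_self)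

lemma f23_add_cancel [simp]: "(x::f23) + y + y = x"
  by (simp add: add.assoc)

lemma dot_sym: "dotF2 u v = dotF2 v u"
  unfolding dotF2_def by (simp only: mult.commute)

lemma dot_add: "dotF2 u (v + w) = dotF2 u v + dotF2 u w"
  unfolding dotF2_def by (simp only: vector_add_component distrib_left sum.distrib)

lemma dot_zero [simp]: "dotF2 u 0 = 0" "dotF2 0 u = 0"
  unfolding dotF2_def by simp_all

lemma sign_add: "signF2 u (v + w) = signF2 u v * signF2 u w"
proof -
  have "\<And>a b::bit. (if a + b = 0 then 1 else -1 :: int) = (if a = 0 then 1 else -1) * (if b = 0 then 1 else -1)"
  proof -
    fix a b :: bit
    show "(if a + b = 0 then 1 else -1 :: int) = (if a = 0 then 1 else -1) * (if b = 0 then 1 else -1)"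
      by (cases a; cases b) (simp_all only: add_0 add_0_right bit_add_self one_neq_zero zero_neq_one if_True if_False, simp_all)
  qed
  thus ?thesis unfolding signF2_def dot_add by blast
qed

lemma sign_sym: "signF2 u v = signF2 v u"
  unfolding signF2_def using dot_sym by simp

lemma sign_add_left: "signF2 (v + w) u = signF2 v u * signF2 w u"
proof -
  have "signF2 (v + w) u = signF2 u (v + w)" by (rule sign_sym)
  also have "\<dots> = signF2 u v * signF2 u w" by (rule sign_add)
  also have "\<dots> = signF2 v u * signF2 w u" using sign_sym by simp
  finally show ?thesis .
qed

lemma sign_zero [simp]: "signF2 u 0 = 1" "signF2 0 u = 1"
  unfolding signF2_def by simp_all

lemma sign_sq [simp]: "signF2 u v * signF2 u v = 1"
  unfolding signF2_def by simp

lemma sign_cases: "signF2 u v = 1 \<longleftrightarrow> dotF2 u v = 0" "signF2 u v = -1 \<longleftrightarrow> dotF2 u v = 1"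
  unfolding signF2_def by auto

lemma exists_dot1:
  assumes "v \<noteq> (0::f23)" shows "\<exists>e. dotF2 e v = 1"
proof -
  from assms obtain i where "v $ i \<noteq> 0" by (auto simp: vec_eq_iff)
  hence vi: "v $ i = 1" by simp
  have "dotF2 (axis i 1) v = (\<Sum>j\<in>UNIV. (if j = i then v $ j else 0))"
    unfolding dotF2_def axis_def by (intro sum.cong) auto
  also have "\<dots> = 1" using vi by simp
  finally show ?thesis by blast
qed

lemma sum_shift: "(\<Sum>u\<in>UNIV. g (u + m)) = (\<Sum>u\<in>(UNIV::f23 set). g u)"
  by (rule sum.reindex_bij_witness[of _ "\<lambda>u. u + m" "\<lambda>u. u + m"]) auto

lemma orth: "(\<Sum>t\<in>UNIV. signF2 t v) = (if v = 0 then 8 else 0)"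
proof (cases "v = 0")
  case True thus ?thesis by (simp add: bit_UNIV)
next
  case False
  then obtain e where e: "dotF2 e v = 1" using exists_dot1 by blast
  have "(\<Sum>t\<in>UNIV. signF2 t v) = (\<Sum>t\<in>UNIV. signF2 (t + e) v)"
    by (rule sum_shift[symmetric])
  also have "\<dots> = - (\<Sum>t\<in>UNIV. signF2 t v)"
  proof -
    have "signF2 e v = -1" using e sign_cases(2) by blast
    thus ?thesis by (simp add: sign_add_left sum_negf)
  qed
  finally show ?thesis using False by simp
qed

definition FT :: "(f23 \<Rightarrow> 'a::comm_ring_1) \<Rightarrow> f23 \<Rightarrow> 'a" where
  "FT f t = (\<Sum>u\<in>UNIV. of_int (signF2 t u) * f u)"

definition Lap :: "f23 list \<Rightarrow> (f23 \<Rightarrow> 'a::comm_ring_1) \<Rightarrow> f23 \<Rightarrow> 'a" where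
  "Lap M f u = (\<Sum>w\<in>UNIV. of_int (laplacian M u w) * f w)"

lemma inversion: "(\<Sum>t\<in>UNIV. of_int (signF2 t w) * FT f t) = 8 * f w"
proof -
  have "(\<Sum>t\<in>UNIV. of_int (signF2 t w) * FT f t)
      = (\<Sum>t\<in>UNIV. \<Sum>u\<in>UNIV. of_int (signF2 t (w + u)) * f u)"
    unfolding FT_def sum_distrib_left sign_add of_int_mult by (simp add: mult.assoc)
  also have "\<dots> = (\<Sum>u\<in>UNIV. (\<Sum>t\<in>UNIV. of_int (signF2 t (w + u))) * f u)"
    by (subst sum.swap) (simp add: sum_distrib_right)
  also have "\<dots> = (\<Sum>u\<in>UNIV. (if u = w then 8 * f u else 0))"
    by (intro sum.cong refl) (simp only: of_int_sum[symmetric] orth f23_add_eq0, auto)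
  also have "\<dots> = 8 * f w" by simp
  finally show ?thesis .
qed

lemma orth2: "(\<Sum>w\<in>UNIV. signF2 s w * signF2 t w) = (if s = t then 8 else 0)"
proof -
  have "(\<Sum>w\<in>UNIV. signF2 s w * signF2 t w) = (\<Sum>w\<in>UNIV. signF2 w (s + t))"
  proof (intro sum.cong refl)
    fix w show "signF2 s w * signF2 t w = signF2 w (s + t)"
      using sign_add[of w s t] sign_sym[of s w] sign_sym[of t w] by simp
  qed
  also have "\<dots> = (if s = t then 8 else 0)" by (simp add: orth f23_add_eq0)
  finally show ?thesis .
qed

lemma FT_inj:
  fixes a b :: "f23 \<Rightarrow> real"
  assumes "\<And>t. FT a t = FT b t" shows "a = b"
proof
  fix w
  have "8 * a w = 8 * b w" using inversion[of w a] inversion[of w b] assms by simp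
  thus "a w = b w" by simp
qed

lemma laplacian_alt:
  assumes nz: "\<forall>v\<in>set M. v \<noteq> 0"
  shows "laplacian M u w = int (length M) * (if u = w then 1 else 0) - int (card {i. i < length M \<and> u + M ! i = w})"
proof (cases "u = w")
  case True
  have "u + M ! i \<noteq> w" if "i < length M" for i
  proof
    assume "u + M ! i = w"
    hence "M ! i = 0" using True by (metis add_0_right add_left_imp_eq)
    moreover have "M ! i \<in> set M" using \<open>i < length M\<close> by simp
    ultimately show False using nz by blast
  qed
  hence "{i. i < length M \<and> u + M ! i = w} = {}" by blast
  thus ?thesis using True by (simp add: laplacian_def)
next
  case False thus ?thesis by (simp add: laplacian_def)
qed

lemma lap_eq:
  assumes nz: "\<forall>v\<in>set M. v \<noteq> 0"
  shows "Lap M f u = of_nat (length M) * f u - (\<Sum>i<length M. f (u + M ! i))"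
proof -
  let ?n = "length M"
  have g: "(\<Sum>w\<in>UNIV. (\<Sum>i\<in>{i. i \<in> {..<?n} \<and> u + M ! i = w}. f (u + M ! i))) = (\<Sum>i<?n. f (u + M ! i))"
    by (rule sum.group) auto
  have c: "(\<Sum>i\<in>{i. i \<in> {..<?n} \<and> u + M ! i = w}. f (u + M ! i)) = of_nat (card {i. i < ?n \<and> u + M ! i = w}) * f w" for w
  proof -
    have "(\<Sum>i\<in>{i. i \<in> {..<?n} \<and> u + M ! i = w}. f (u + M ! i)) = (\<Sum>i\<in>{i. i < ?n \<and> u + M ! i = w}. f w)"
      by (intro sum.cong) auto
    thus ?thesis by simp
  qed
  have "Lap M f u = (\<Sum>w\<in>UNIV. of_nat ?n * (if u = w then f w else 0) - of_nat (card {i. i < ?n \<and> u + M ! i = w}) * f w)"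
    unfolding Lap_def laplacian_alt[OF nz] by (intro sum.cong refl) (simp add: algebra_simps)
  also have "\<dots> = of_nat ?n * f u - (\<Sum>w\<in>UNIV. of_nat (card {i. i < ?n \<and> u + M ! i = w}) * f w)"
    by (simp add: sum_subtractf flip: sum_distrib_left)
  also have "\<dots> = of_nat ?n * f u - (\<Sum>i<?n. f (u + M ! i))"
    using g c by simp
  finally show ?thesis .
qed

lemma shift_char: "(\<Sum>u\<in>UNIV. of_int (signF2 t u) * f (u + m)) = of_int (signF2 t m) * FT f t"
proof -
  have "(\<Sum>u\<in>UNIV. of_int (signF2 t u) * f (u + m)) = (\<Sum>u\<in>UNIV. (\<lambda>v. of_int (signF2 t (v + m)) * f v) (u + m))"
    by simp
  also have "\<dots> = (\<Sum>v\<in>UNIV. of_int (signF2 t (v + m)) * f v)" by (rule sum_shift)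
  also have "\<dots> = of_int (signF2 t m) * FT f t"
    unfolding FT_def sum_distrib_left sign_add of_int_mult by (intro sum.cong refl) (simp add: ac_simps)
  finally show ?thesis .
qed

lemma lam_alt: "(of_int (lam M t) :: 'a::comm_ring_1) = of_nat (length M) - (\<Sum>i<length M. of_int (signF2 t (M ! i)))"
  unfolding lam_def by simp

lemma eigen:
  assumes nz: "\<forall>v\<in>set M. v \<noteq> 0"
  shows "FT (Lap M f) t = of_int (lam M t) * FT f t"
proof -
  have "FT (Lap M f) t = (\<Sum>u\<in>UNIV. of_int (signF2 t u) * (of_nat (length M) * f u) - (\<Sum>i<length M. of_int (signF2 t u) * f (u + M ! i)))"
    unfolding FT_def lap_eq[OF nz] by (simp add: right_diff_distrib sum_distrib_left)
  also have "\<dots> = of_nat (length M) * FT f t - (\<Sum>i<length M. \<Sum>u\<in>UNIV. of_int (signF2 t u) * f (u + M ! i))"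
    unfolding sum_subtractf FT_def by (subst sum.swap) (simp add: sum_distrib_left ac_simps)
  also have "\<dots> = of_nat (length M) * FT f t - (\<Sum>i<length M. of_int (signF2 t (M ! i)) * FT f t)"
    by (simp add: shift_char)
  also have "\<dots> = of_int (lam M t) * FT f t"
    unfolding lam_alt by (simp add: left_diff_distrib sum_distrib_right)
  finally show ?thesis .
qed

lemma lam_zero: "lam M 0 = 0"
  unfolding lam_def by simp

lemma FT_zero: "FT f 0 = (\<Sum>u\<in>UNIV. f u)"
  unfolding FT_def by simp

lemma Lap_const:
  assumes nz: "\<forall>v\<in>set M. v \<noteq> 0"
  shows "Lap M (\<lambda>_. c) u = 0"
  unfolding lap_eq[OF nz] by simp

lemma Lap_diff: "Lap M (\<lambda>w. f w - g w) u = Lap M f u - Lap M g u"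
  unfolding Lap_def by (simp add: right_diff_distrib sum_subtractf)

lemma Lap_of_int: "Lap M (\<lambda>w. of_int (z w)) u = of_int (Lap M z u)"
  unfolding Lap_def by simp

lemma in_image_Lap: "in_image M x \<longleftrightarrow> (\<exists>y. \<forall>u. x u = Lap M y u)"
  unfolding in_image_def Lap_def by simp

lemma dot_smult: "dotF2 t (c *s v) = c * dotF2 t v"
  unfolding dotF2_def by (simp only: vector_smult_component sum_distrib_left mult.left_commute)

lemma lam_nonzero:
  assumes gen: "vec.span (set M) = UNIV" and t: "t \<noteq> 0"
  shows "lam M t \<noteq> 0"
proof
  assume l0: "lam M t = 0"
  have "lam M t = (\<Sum>i<length M. 1 - signF2 t (M ! i))"
    unfolding lam_def by (simp add: sum_subtractf)
  hence s0: "(\<Sum>i<length M. 1 - signF2 t (M ! i)) = 0" using l0 by simp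
  have nn: "\<forall>i\<in>{..<length M}. 0 \<le> 1 - signF2 t (M ! i)"
    unfolding signF2_def by auto
  have "\<forall>i\<in>{..<length M}. 1 - signF2 t (M ! i) = 0"
  proof -
    have "(\<Sum>i<length M. 1 - signF2 t (M ! i)) = 0 \<longleftrightarrow> (\<forall>i\<in>{..<length M}. 1 - signF2 t (M ! i) = 0)"
      by (rule sum_nonneg_eq_0_iff) (use nn in auto)
    thus ?thesis using s0 by blast
  qed
  hence A: "\<forall>i<length M. dotF2 t (M ! i) = 0" using sign_cases(1) by auto
  let ?T = "{v. dotF2 t v = 0}"
  have "set M \<subseteq> ?T" using A by (auto simp: in_set_conv_nth)
  moreover have "vec.subspace ?T"
    unfolding vec.subspace_def by (auto simp: dot_add dot_smult)
  ultimately have "vec.span (set M) \<subseteq> ?T" by (rule vec.span_minimal)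
  hence all: "\<forall>v. dotF2 t v = 0" using gen by auto
  obtain e where "dotF2 e t = 1" using exists_dot1[OF t] by blast
  thus False using all dot_sym[of e t] by simp
qed

lemma card_as_sum: "int (card {h::f23. P h}) = (\<Sum>h\<in>UNIV. if P h then 1 else 0)"
proof -
  have "int (card {h::f23. P h}) = (\<Sum>h\<in>{h\<in>UNIV. P h}. 1)" by simp
  also have "\<dots> = (\<Sum>h\<in>UNIV. if P h then 1 else 0)" by (rule sum.inter_filter) simp
  finally show ?thesis .
qed

lemma sum_sign_left: "(\<Sum>h\<in>UNIV. signF2 h a) = (if a = 0 then 8 else 0)"
  by (rule orth)

lemma count1: "int (card {h. dotF2 h a = 1 \<and> dotF2 h b = 1}) * 4
   = 8 - 8 * (if a = 0 then 1 else 0) - 8 * (if b = 0 then 1 else 0) + 8 * (if a = b then 1 else 0)"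
proof -
  have i: "(if dotF2 h a = 1 \<and> dotF2 h b = 1 then 1 else 0) * 4 = 1 - signF2 h a - signF2 h b + signF2 h (a + b)" for h
    unfolding sign_add by (cases "dotF2 h a"; cases "dotF2 h b") (simp_all add: signF2_def)
  have "int (card {h. dotF2 h a = 1 \<and> dotF2 h b = 1}) * 4 = (\<Sum>h\<in>UNIV. 1 - signF2 h a - signF2 h b + signF2 h (a + b))"
    unfolding card_as_sum sum_distrib_right i by simp
  also have "\<dots> = 8 - 8 * (if a = 0 then 1 else 0) - 8 * (if b = 0 then 1 else 0) + 8 * (if a = b then 1 else 0)"
    by (simp add: sum.distrib sum_subtractf orth f23_add_eq0 bit_UNIV)
  finally show ?thesis .
qed

lemma count2: "int (card {h. dotF2 h a = 0 \<and> dotF2 h b = 1}) * 4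
   = 8 + 8 * (if a = 0 then 1 else 0) - 8 * (if b = 0 then 1 else 0) - 8 * (if a = b then 1 else 0)"
proof -
  have i: "(if dotF2 h a = 0 \<and> dotF2 h b = 1 then 1 else 0) * 4 = 1 + signF2 h a - signF2 h b - signF2 h (a + b)" for h
    unfolding sign_add by (cases "dotF2 h a"; cases "dotF2 h b") (simp_all add: signF2_def)
  have "int (card {h. dotF2 h a = 0 \<and> dotF2 h b = 1}) * 4 = (\<Sum>h\<in>UNIV. 1 + signF2 h a - signF2 h b - signF2 h (a + b))"
    unfolding card_as_sum sum_distrib_right i by simp
  also have "\<dots> = 8 + 8 * (if a = 0 then 1 else 0) - 8 * (if b = 0 then 1 else 0) - 8 * (if a = b then 1 else 0)"
    by (simp add: sum.distrib sum_subtractf orth f23_add_eq0 bit_UNIV)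
  finally show ?thesis .
qed

lemma pair_exists:
  assumes "t1 \<noteq> t2" "t1 \<noteq> 0" "t2 \<noteq> 0"
  shows "\<exists>g w. {t. dotF2 t w = 1 \<and> dotF2 t g = 1} = {t1, t2}"
proof -
  define z where "z = t1 + t2"
  have z0: "z \<noteq> 0" using assms(1) by (simp add: z_def f23_add_eq0)
  have zt1: "z \<noteq> t1"
  proof
    assume "z = t1"
    hence "t1 + t2 = t1 + 0" unfolding z_def by simp
    hence "t2 = 0" by (rule add_left_imp_eq)
    thus False using assms(3) by simp
  qed
  have "int (card {h. dotF2 h z = 0 \<and> dotF2 h t1 = 1}) * 4 = 8"
    using count2[of z t1] z0 zt1 assms(2) by simp
  hence "card {h. dotF2 h z = 0 \<and> dotF2 h t1 = 1} = 2" by simp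
  then obtain g w where gw: "{h. dotF2 h z = 0 \<and> dotF2 h t1 = 1} = {g, w}" "g \<noteq> w"
    by (auto simp: card_2_iff)
  have g: "dotF2 g z = 0" "dotF2 g t1 = 1" and w: "dotF2 w z = 0" "dotF2 w t1 = 1"
    using gw(1) by blast+
  have g0: "g \<noteq> 0" and w0: "w \<noteq> 0" using g w by auto
  let ?S = "{t. dotF2 t w = 1 \<and> dotF2 t g = 1}"
  have "int (card ?S) * 4 = 8" using count1[of w g] g0 w0 gw(2) by auto
  hence cS: "card ?S = 2" by simp
  have t2eq: "t2 = t1 + z" unfolding z_def by (simp add: add.assoc[symmetric])
  have "t1 \<in> ?S" using g w dot_sym[of t1 w] dot_sym[of t1 g] by simp
  moreover have "t2 \<in> ?S" using g w dot_sym[of t2 w] dot_sym[of t2 g] unfolding t2eq dot_add by simp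
  ultimately have sub: "{t1, t2} \<subseteq> ?S" by blast
  have "{t1, t2} = ?S"
    by (rule card_subset_eq) (use sub cS assms(1) in auto)
  thus ?thesis by blast
qed

lemma in_image_add: "in_image M x \<Longrightarrow> in_image M y \<Longrightarrow> in_image M (\<lambda>u. x u + y u)"
proof -
  assume "in_image M x" "in_image M y"
  then obtain a b where a: "\<forall>u. x u = (\<Sum>w\<in>UNIV. laplacian M u w * a w)"
    and b: "\<forall>u. y u = (\<Sum>w\<in>UNIV. laplacian M u w * b w)" unfolding in_image_def by blast
  have *: "\<forall>u. x u + y u = (\<Sum>w\<in>UNIV. laplacian M u w * (a w + b w))"
    using a b by (simp add: distrib_left sum.distrib)
  show ?thesis unfolding in_image_def by (rule exI[of _ "\<lambda>w. a w + b w"]) (simp only: *, simp)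
qed

lemma in_image_smult: "in_image M x \<Longrightarrow> in_image M (\<lambda>u. c * x u)"
  unfolding in_image_def
proof -
  assume "\<exists>y. \<forall>u. x u = (\<Sum>w\<in>UNIV. laplacian M u w * y w)"
  then obtain y where y: "\<forall>u. x u = (\<Sum>w\<in>UNIV. laplacian M u w * y w)" by blast
  have *: "\<forall>u. c * x u = (\<Sum>w\<in>UNIV. laplacian M u w * (c * y w))"
    using y by (simp add: sum_distrib_left mult.left_commute)
  show "\<exists>y. \<forall>u. c * x u = (\<Sum>w\<in>UNIV. laplacian M u w * y w)"
    by (rule exI[of _ "\<lambda>w. c * y w"]) (simp only: *, simp)
qed

definition dlt :: "f23 \<Rightarrow> f23 \<Rightarrow> int" where
  "dlt g u = (if u = g then 1 else 0) - (if u = 0 then 1 else 0)"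

lemma FT_dlt: "FT (\<lambda>u. of_int (K * dlt g u)) s = (of_int K * (of_int (signF2 s g) - 1) :: 'a::comm_ring_1)"
proof -
  have "FT (\<lambda>u. of_int (K * dlt g u)) s = (\<Sum>u\<in>UNIV. (if u = g then of_int K * of_int (signF2 s u) else 0) - (if u = 0 then of_int K * of_int (signF2 s u) else 0) :: 'a)"
    unfolding FT_def dlt_def by (intro sum.cong refl) (auto simp: algebra_simps)
  also have "\<dots> = of_int K * (of_int (signF2 s g) - 1)"
    by (simp add: sum_subtractf algebra_simps)
  finally show ?thesis .
qed

lemma sum_if_set: "(\<Sum>t\<in>(UNIV::f23 set). if t \<in> A then f t else 0) = sum f A"
  by (simp add: sum.If_cases)

lemma construct:
  assumes nz: "\<forall>v\<in>set M. v \<noteq> 0"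
    and lnz: "\<And>t. t \<noteq> 0 \<Longrightarrow> lam M t \<noteq> 0"
    and H: "\<And>S. 0 \<notin> S \<Longrightarrow> even (card S) \<Longrightarrow> (\<Sum>t\<in>S. real_of_int N / (2 * real_of_int (lam M t))) \<in> \<int>"
  shows "in_image M (\<lambda>u. N * dlt g u)"
proof -
  define c :: "f23 \<Rightarrow> real" where "c t = (of_int (signF2 t g) - 1) / of_int (lam M t)" for t
  define Y :: "f23 \<Rightarrow> real" where "Y w = (of_int N / 8) * (\<Sum>t\<in>UNIV. of_int (signF2 t w) * c t)" for w
  define E :: "f23 \<Rightarrow> real" where "E u = of_int (N * dlt g u)" for u
  have FTY: "FT Y s = of_int N * c s" for s
  proof -
    have "FT Y s = (of_int N / 8) * (\<Sum>t\<in>UNIV. c t * (\<Sum>w\<in>UNIV. of_int (signF2 s w * signF2 t w)))"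
      unfolding FT_def Y_def sum_distrib_left
      by (subst sum.swap) (simp add: sum_distrib_left ac_simps)
    also have "\<dots> = (of_int N / 8) * (\<Sum>t\<in>UNIV. if t = s then 8 * c t else 0)"
      by (simp only: of_int_sum[symmetric] orth2) (intro arg_cong[where f="\<lambda>x. (of_int N / 8) * x"] sum.cong refl, auto)
    also have "\<dots> = of_int N * c s" by simp
    finally show ?thesis .
  qed
  have "FT (Lap M Y) s = FT E s" for s
  proof (cases "s = 0")
    case True
    thus ?thesis unfolding eigen[OF nz] E_def FT_dlt by (simp add: lam_zero)
  next
    case False
    hence "real_of_int (lam M s) \<noteq> 0" using lnz by simp
    thus ?thesis unfolding eigen[OF nz] E_def FT_dlt FTY c_def by simp
  qed
  hence LY: "Lap M Y = E" by (rule FT_inj)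
  define Z where "Z w = Y w - Y 0" for w
  have LZ: "Lap M Z u = E u" for u
  proof -
    have "Lap M Z u = Lap M Y u - Lap M (\<lambda>_. Y 0) u" unfolding Z_def by (rule Lap_diff)
    thus ?thesis using LY Lap_const[OF nz] by simp
  qed
  have Zint: "Z w \<in> \<int>" for w
  proof -
    let ?S = "{t. dotF2 t w = 1 \<and> dotF2 t g = 1}"
    have "Z w = (of_int N / 8) * (\<Sum>t\<in>UNIV. (of_int (signF2 t w) - 1) * c t)"
      unfolding Z_def Y_def by (simp add: sum_subtractf left_diff_distrib right_diff_distrib)
    also have "\<dots> = (\<Sum>t\<in>UNIV. if t \<in> ?S then real_of_int N / (2 * real_of_int (lam M t)) else 0)"
      unfolding sum_distrib_left
    proof (intro sum.cong refl)
      fix t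
      show "of_int N / 8 * ((of_int (signF2 t w) - 1) * c t) = (if t \<in> ?S then real_of_int N / (2 * real_of_int (lam M t)) else 0)"
        unfolding c_def signF2_def by (cases "dotF2 t w"; cases "dotF2 t g") (simp_all add: field_simps)
    qed
    also have "\<dots> = (\<Sum>t\<in>?S. real_of_int N / (2 * real_of_int (lam M t)))" by (rule sum_if_set)
    finally have Zw: "Z w = \<dots>" .
    have "0 \<notin> ?S" by simp
    moreover have "even (card ?S)"
    proof -
      have "int (card ?S) * 4 = 8 - 8 * (if w = 0 then 1 else 0) - 8 * (if g = 0 then 1 else 0) + 8 * (if w = g then 1 else 0)"
        by (rule count1)
      hence "int (card ?S) = 2 * (1 - (if w = 0 then 1 else 0) - (if g = 0 then 1 else 0) + (if w = g then 1 else 0))"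
        by simp
      hence "even (int (card ?S))" by simp
      thus ?thesis by simp
    qed
    ultimately show ?thesis using H Zw by simp
  qed
  define z where "z w = \<lfloor>Z w\<rfloor>" for w
  have zZ: "real_of_int (z w) = Z w" for w
    using Zint[of w] unfolding z_def by (auto elim: Ints_cases)
  have "Lap M z u = N * dlt g u" for u
  proof -
    have "real_of_int (Lap M z u) = Lap M (\<lambda>w. real_of_int (z w)) u" by (rule Lap_of_int[symmetric])
    also have "\<dots> = Lap M Z u" using zZ by simp
    also have "\<dots> = real_of_int (N * dlt g u)" using LZ E_def by simp
    finally show ?thesis by (simp only: of_int_eq_iff)
  qed
  thus ?thesis unfolding in_image_Lap by (intro exI[of _ z]) simp
qed

lemma image_sum_zero:
  assumes nz: "\<forall>v\<in>set M. v \<noteq> 0" and im: "in_image M x"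
  shows "(\<Sum>u\<in>UNIV. x u) = 0"
proof -
  obtain y where y: "\<forall>u. x u = Lap M y u" using im unfolding in_image_Lap by blast
  have "(\<Sum>u\<in>UNIV. x u) = FT (Lap M y) 0" unfolding FT_zero using y by simp
  also have "\<dots> = 0" unfolding eigen[OF nz] lam_zero by simp
  finally show ?thesis .
qed

lemma upper_all:
  assumes all: "\<And>g. in_image M (\<lambda>u. N * dlt g u)" and sz: "(\<Sum>u\<in>UNIV. x u) = 0"
  shows "in_image M (\<lambda>u. N * x u)"
proof -
  have "\<forall>g. \<exists>y. \<forall>u. N * dlt g u = Lap M y u" using all unfolding in_image_Lap by blast
  then obtain Yf where Yf: "\<And>g u. N * dlt g u = Lap M (Yf g) u" by metis
  define y where "y w = (\<Sum>g\<in>UNIV. x g * Yf g w)" for w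
  have "Lap M y u = N * x u" for u
  proof -
    have "Lap M y u = (\<Sum>g\<in>UNIV. x g * Lap M (Yf g) u)"
      unfolding Lap_def y_def sum_distrib_left by (subst sum.swap) (simp add: ac_simps)
    also have "\<dots> = (\<Sum>g\<in>UNIV. N * (x g * dlt g u))" by (simp add: Yf[symmetric] ac_simps)
    also have "\<dots> = N * (\<Sum>g\<in>UNIV. x g * dlt g u)" by (simp add: sum_distrib_left)
    also have "(\<Sum>g\<in>UNIV. x g * dlt g u) = (\<Sum>g\<in>UNIV. (if g = u then x g else 0)) - (\<Sum>g\<in>UNIV. (if u = 0 then x g else 0))"
      unfolding sum_subtractf[symmetric] dlt_def by (intro sum.cong refl) auto
    also have "\<dots> = x u" using sz by (cases "u = 0") simp_all
    finally show ?thesis .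
  qed
  thus ?thesis unfolding in_image_Lap by (intro exI[of _ y]) simp
qed

lemma combine:
  assumes a: "in_image M (\<lambda>u. 2 ^ k * x u)" and b: "in_image M (\<lambda>u. (2 ^ c * Od) * x u)" and Od: "odd Od"
  shows "in_image M (\<lambda>u. 2 ^ c * x u)"
proof (cases "k \<le> c")
  case True
  have "in_image M (\<lambda>u. 2 ^ (c - k) * (2 ^ k * x u))" by (rule in_image_smult[OF a])
  moreover have "(2::int) ^ (c - k) * 2 ^ k = 2 ^ c" using True by (simp flip: power_add)
  ultimately show ?thesis by (simp add: mult.assoc[symmetric])
next
  case False
  have "coprime Od (2 ^ (k - c))" using Od by simp
  hence "gcd Od (2 ^ (k - c)) = 1" by simp
  then obtain p q where pq: "p * Od + q * 2 ^ (k - c) = 1" using bezout_int[of Od "2 ^ (k - c)"] by auto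
  have "in_image M (\<lambda>u. p * ((2 ^ c * Od) * x u) + q * (2 ^ k * x u))"
    by (intro in_image_add in_image_smult a b)
  moreover have "p * ((2 ^ c * Od) * x u) + q * (2 ^ k * x u) = 2 ^ c * x u" for u
  proof -
    have "(2::int) ^ k = 2 ^ c * 2 ^ (k - c)" using False by (simp flip: power_add)
    hence "p * ((2 ^ c * Od) * x u) + q * (2 ^ k * x u) = 2 ^ c * x u * (p * Od + q * 2 ^ (k - c))"
      by (simp add: algebra_simps)
    thus ?thesis using pq by simp
  qed
  ultimately show ?thesis by simp
qed

lemma lower:
  assumes nz: "\<forall>v\<in>set M. v \<noteq> 0"
    and lnz: "\<And>t. t \<noteq> 0 \<Longrightarrow> lam M t \<noteq> 0"
    and S: "{t. dotF2 t w = 1 \<and> dotF2 t g = 1} = {t1, t2}" and t12: "t1 \<noteq> t2"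
    and im: "in_image M (\<lambda>u. K * dlt g u)"
  shows "\<exists>f1 f2. lam M t1 * f1 = -2 * K \<and> lam M t2 * f2 = -2 * K \<and> 4 dvd (f1 + f2)"
proof -
  obtain y where y: "\<forall>u. K * dlt g u = Lap M y u" using im unfolding in_image_Lap by blast
  hence yy: "(\<lambda>u. of_int (K * dlt g u)) = Lap M y" by auto
  have ev: "lam M t * FT y t = K * (signF2 t g - 1)" for t
  proof -
    have "FT (Lap M y) t = FT (\<lambda>u. of_int (K * dlt g u)) t" using yy by simp
    thus ?thesis unfolding eigen[OF nz] FT_dlt by simp
  qed
  have "8 * y w - 8 * y 0 = (\<Sum>t\<in>UNIV. (signF2 t w - 1) * FT y t)"
    using inversion[of w y] inversion[of 0 y] by (simp add: sum_subtractf left_diff_distrib)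
  also have "\<dots> = (\<Sum>t\<in>UNIV. if t \<in> {t1, t2} then -2 * FT y t else 0)"
  proof (intro sum.cong refl)
    fix t
    show "(signF2 t w - 1) * FT y t = (if t \<in> {t1, t2} then -2 * FT y t else 0)"
    proof (cases "dotF2 t w = 1")
      case w1: True
      show ?thesis
      proof (cases "dotF2 t g = 1")
        case True
        hence "t \<in> {t1, t2}" using S w1 by blast
        thus ?thesis using w1 by (simp add: signF2_def)
      next
        case False
        hence "t \<notin> {t1, t2}" using S by blast
        moreover have "t \<noteq> 0" using w1 by auto
        moreover have "signF2 t g = 1" using False by (simp add: signF2_def)
        ultimately show ?thesis using ev[of t] lnz[of t] by simp
      qed
    next
      case False
      hence "t \<notin> {t1, t2}" using S by blast
      thus ?thesis using False by (simp add: signF2_def)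
    qed
  qed
  also have "\<dots> = -2 * FT y t1 + -2 * FT y t2" unfolding sum_if_set using t12 by simp
  finally have eq: "8 * y w - 8 * y 0 = -2 * FT y t1 + -2 * FT y t2" .
  have "t1 \<in> {t1, t2}" "t2 \<in> {t1, t2}" by auto
  hence "dotF2 t1 g = 1" "dotF2 t2 g = 1" using S by blast+
  hence "signF2 t1 g = -1" "signF2 t2 g = -1" by (simp_all add: signF2_def)
  hence "lam M t1 * FT y t1 = -2 * K" "lam M t2 * FT y t2 = -2 * K" using ev by simp_all
  moreover have "FT y t1 + FT y t2 = 4 * (y 0 - y w)" using eq by simp
  ultimately show ?thesis by (intro exI[of _ "FT y t1"] exI[of _ "FT y t2"]) auto
qed

lemma nt_uneq:
  fixes l1 l2 f1 f2 m Od o1 o2 :: int and D1 D2 :: nat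
  assumes l1: "l1 = 2 ^ D1 * o1" and l2: "l2 = 2 ^ D2 * o2" and odd: "odd o1" "odd o2" "odd Od"
    and lt: "D2 < D1" and e1: "l1 * f1 = -2 * (m * Od)" and e2: "l2 * f2 = -2 * (m * Od)"
    and dv: "4 dvd (f1 + f2)"
  shows "2 ^ (D1 + 1) dvd m"
proof -
  obtain k where k: "f1 + f2 = 4 * k" using dv by blast
  have "l1 * l2 * (f1 + f2) = l2 * (l1 * f1) + l1 * (l2 * f2)" by (simp add: algebra_simps)
  also have "\<dots> = -2 * (m * Od) * (l1 + l2)" using e1 e2 by (simp add: algebra_simps)
  finally have E: "l1 * l2 * (4 * k) = -2 * (m * Od) * (l1 + l2)" using k by simp
  define q where "q = 2 ^ (D1 - D2) * o1 + o2"
  have oq: "odd q" unfolding q_def using odd lt by simp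
  have p: "(2::int) ^ D1 = 2 ^ D2 * 2 ^ (D1 - D2)" using lt by (simp flip: power_add)
  have s: "l1 + l2 = 2 ^ D2 * q" unfolding q_def l1 l2 p by (simp add: algebra_simps)
  have A: "l1 * l2 * (4 * k) = (2 ^ D2 * 2) * (2 * 2 ^ D1 * o1 * o2 * k)" unfolding l1 l2 by algebra
  have B: "-2 * (m * Od) * (2 ^ D2 * q) = (2 ^ D2 * 2) * (- (m * (Od * q)))" by algebra
  have "(2 ^ D2 * 2) * (2 * 2 ^ D1 * o1 * o2 * k) = (2 ^ D2 * 2) * (- (m * (Od * q)))"
    using E by (simp only: s A B)
  moreover have c0: "(2::int) ^ D2 * 2 \<noteq> 0" by simp
  ultimately have e2: "2 * 2 ^ D1 * o1 * o2 * k = - (m * (Od * q))" by (simp only: mult_left_cancel[OF c0])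
  have "m * (Od * q) = 2 ^ (D1 + 1) * (- (o1 * o2 * k))"
  proof -
    have "m * (Od * q) = - (2 * 2 ^ D1 * o1 * o2 * k)" using e2 by simp
    also have "\<dots> = 2 ^ (D1 + 1) * (- (o1 * o2 * k))" by (simp add: power_add mult_ac)
    finally show ?thesis .
  qed
  hence "2 ^ (D1 + 1) dvd m * (Od * q)" by (metis dvd_triv_left)
  moreover have "coprime (2 ^ (D1 + 1)) (Od * q :: int)" using odd oq by simp
  ultimately show ?thesis using coprime_dvd_mult_left_iff by blast
qed

lemma nt_eq:
  fixes l1 l2 f1 f2 m Od o1 o2 :: int and D :: nat
  assumes l1: "l1 = 2 ^ D * o1" and l2: "l2 = 2 ^ D * o2" and odd: "odd o1" "odd o2" "odd Od"
    and md: "o1 mod 4 = o2 mod 4" and e1: "l1 * f1 = -2 * (m * Od)" and e2: "l2 * f2 = -2 * (m * Od)"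
    and dv: "4 dvd (f1 + f2)"
  shows "2 ^ D dvd m"
proof -
  obtain k where k: "f1 + f2 = 4 * k" using dv by blast
  have "l1 * l2 * (f1 + f2) = l2 * (l1 * f1) + l1 * (l2 * f2)" by (simp add: algebra_simps)
  also have "\<dots> = -2 * (m * Od) * (l1 + l2)" using e1 e2 by (simp add: algebra_simps)
  finally have E: "l1 * l2 * (4 * k) = -2 * (m * Od) * (l1 + l2)" using k by simp
  have "even (o1 + o2)" using odd by simp
  then obtain q where q: "o1 + o2 = 2 * q" by blast
  have oq: "odd q"
  proof
    assume "even q"
    then obtain r where "q = 2 * r" by blast
    hence "o1 + o2 = 4 * r" using q by simp
    thus False using md odd by presburger
  qed
  have s: "l1 + l2 = 2 ^ D * (2 * q)" unfolding l1 l2 q[symmetric] by (simp add: algebra_simps)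
  have A: "l1 * l2 * (4 * k) = (4 * 2 ^ D) * (2 ^ D * o1 * o2 * k)" unfolding l1 l2 by algebra
  have B: "-2 * (m * Od) * (2 ^ D * (2 * q)) = (4 * 2 ^ D) * (- (m * (Od * q)))" by algebra
  have "(4 * 2 ^ D) * (2 ^ D * o1 * o2 * k) = (4 * 2 ^ D) * (- (m * (Od * q)))"
    using E by (simp only: s A B)
  moreover have c0: "(4::int) * 2 ^ D \<noteq> 0" by simp
  ultimately have e2: "2 ^ D * o1 * o2 * k = - (m * (Od * q))" by (simp only: mult_left_cancel[OF c0])
  have "m * (Od * q) = 2 ^ D * (- (o1 * o2 * k))"
  proof -
    have "m * (Od * q) = - (2 ^ D * o1 * o2 * k)" using e2 by simp
    also have "\<dots> = 2 ^ D * (- (o1 * o2 * k))" by (simp add: mult_ac)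
    finally show ?thesis .
  qed
  hence "2 ^ D dvd m * (Od * q)" by (metis dvd_triv_left)
  moreover have "coprime (2 ^ D) (Od * q :: int)" using odd oq by simp
  ultimately show ?thesis using coprime_dvd_mult_left_iff by blast
qed

theorem mainTheorem15:
  fixes M :: "f23 list"
  assumes nonzero: "\<forall>v\<in>set M. v \<noteq> 0"
    and generates: "vec.span (set M) = UNIV"
    and gcd_mult: "Gcd ((\<lambda>v. count_list M v) ` set M) = 1"
  shows "let d = (\<lambda>u. multiplicity (2::int) (lam M u));
             D = {d u | u. u \<noteq> 0}
         in sylow2_largest_cyclic M =
              (if Min D = Max D then 2 ^ Max D else 2 ^ (Max D + 1))"
proof -
  define d where "d = (\<lambda>u. multiplicity (2::int) (lam M u))"
  define D where "D = {d u | u. u \<noteq> 0}"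
  have lnz: "\<And>t. t \<noteq> 0 \<Longrightarrow> lam M t \<noteq> 0" using lam_nonzero[OF generates] by blast
  define od where "od t = lam M t div 2 ^ d t" for t
  have dec: "lam M t = 2 ^ d t * od t" "odd (od t)" if "t \<noteq> 0" for t
  proof -
    have "2 ^ d t dvd lam M t" unfolding d_def by (rule multiplicity_dvd)
    thus "lam M t = 2 ^ d t * od t" unfolding od_def by simp
    show "odd (od t)" unfolding od_def d_def
      using multiplicity_decompose[of "lam M t" 2] lnz[OF that] by simp
  qed
  define A where "A = (UNIV :: f23 set) - {0}"
  have finA: "finite A" unfolding A_def by simp
  define Od where "Od = (\<Prod>t\<in>A. od t)"
  have oddO: "odd Od" unfolding Od_def using finA dec(2) by (simp add: even_prod_iff A_def)
  have odvd: "od t dvd Od" if "t \<noteq> 0" for t unfolding Od_def using finA that by (auto simp: A_def)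
  have DA: "D = d ` A" unfolding D_def A_def by auto
  have a0: "axis 0 (1::bit) \<noteq> (0::f23)" by simp
  have finD: "finite D" unfolding DA using finA by simp
  have neD: "D \<noteq> {}" unfolding DA A_def using a0 by blast
  define Dm where "Dm = Max D"
  define Dn where "Dn = Min D"
  have dle: "Dn \<le> d t \<and> d t \<le> Dm" if "t \<noteq> 0" for t
    unfolding Dm_def Dn_def using finD that by (auto simp: DA A_def)
  define c where "c = (if Dn = Dm then Dm else Dm + 1)"
  define N where "N = 2 ^ c * Od"
  have H: "(\<Sum>t\<in>S. real_of_int N / (2 * real_of_int (lam M t))) \<in> \<int>"
    if S0: "0 \<notin> S" and ev: "even (card S)" for S
  proof (cases "Dn = Dm")
    case True
    have dt: "d t = Dm" if "t \<noteq> 0" for t using dle[OF that] True by simp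
    have trm: "real_of_int N / (2 * real_of_int (lam M t)) = real_of_int (Od div od t) / 2" if "t \<in> S" for t
    proof -
      have t0: "t \<noteq> 0" using that S0 by auto
      have l: "lam M t = 2 ^ Dm * od t" using dec(1)[OF t0] dt[OF t0] by simp
      have o: "Od = od t * (Od div od t)" using odvd[OF t0] by simp
      have on: "od t \<noteq> 0" using dec(2)[OF t0] by auto
      have "real_of_int N = 2 ^ Dm * real_of_int (od t) * real_of_int (Od div od t)"
        unfolding N_def c_def using True by (subst o) simp
      thus ?thesis unfolding l using on by (simp add: field_simps)
    qed
    have Xeq: "(\<Sum>t\<in>S. real_of_int N / (2 * real_of_int (lam M t))) = real_of_int (\<Sum>t\<in>S. Od div od t) / 2"
    proof -
      have "(\<Sum>t\<in>S. real_of_int N / (2 * real_of_int (lam M t))) = (\<Sum>t\<in>S. real_of_int (Od div od t) / 2)"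
        by (rule sum.cong[OF refl trm])
      also have "\<dots> = real_of_int (\<Sum>t\<in>S. Od div od t) / 2" by (simp add: sum_divide_distrib)
      finally show ?thesis .
    qed
    have evs: "even (\<Sum>t\<in>S. Od div od t)"
    proof (cases "finite S")
      case True
      have "odd (Od div od t)" if "t \<in> S" for t
      proof -
        have t0: "t \<noteq> 0" using that S0 by auto
        have "Od = od t * (Od div od t)" using odvd[OF t0] by simp
        thus ?thesis using oddO by (metis even_mult_iff)
      qed
      hence "{a \<in> S. odd (Od div od a)} = S" by auto
      thus ?thesis using even_sum_iff[OF True, of "\<lambda>t. Od div od t"] ev by simp
    qed simp
    then obtain b where b: "(\<Sum>t\<in>S. Od div od t) = 2 * b" by (elim evenE)
    have "(\<Sum>t\<in>S. real_of_int N / (2 * real_of_int (lam M t))) = real_of_int b"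
      unfolding Xeq b by simp
    thus ?thesis by simp
  next
    case False
    have "real_of_int N / (2 * real_of_int (lam M t)) \<in> \<int>" if "t \<in> S" for t
    proof -
      have t0: "t \<noteq> 0" using that S0 by auto
      have o: "Od = od t * (Od div od t)" using odvd[OF t0] by simp
      have on: "od t \<noteq> 0" using dec(2)[OF t0] by auto
      have p: "(2::int) ^ (Dm + 1) = 2 * 2 ^ (Dm - d t) * 2 ^ d t"
        using dle[OF t0] by (simp flip: power_add power_Suc)
      have "real_of_int N = 2 * 2 ^ (Dm - d t) * 2 ^ d t * real_of_int (od t) * real_of_int (Od div od t)"
      proof -
        have "N = 2 ^ (Dm + 1) * (od t * (Od div od t))" unfolding N_def c_def using False o by simp
        also have "\<dots> = 2 * 2 ^ (Dm - d t) * 2 ^ d t * od t * (Od div od t)" unfolding p by (simp add: mult_ac)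
        finally show ?thesis by simp
      qed
      hence "real_of_int N / (2 * real_of_int (lam M t)) = real_of_int (2 ^ (Dm - d t) * (Od div od t))"
        unfolding dec(1)[OF t0] using on by (simp add: field_simps)
      thus ?thesis by simp
    qed
    thus ?thesis by (intro Ints_sum) auto
  qed
  have allg: "in_image M (\<lambda>u. N * dlt g u)" for g
    by (rule construct[OF nonzero lnz H]) auto
  have up: "in_image M (\<lambda>u. 2 ^ c * x u)" if xs: "x \<in> sylow2_reps M" for x
  proof -
    obtain k where k: "in_image M (\<lambda>u. 2 ^ k * x u)" using xs unfolding sylow2_reps_def by blast
    have "(\<Sum>u\<in>UNIV. 2 ^ k * x u) = 0" by (rule image_sum_zero[OF nonzero k])
    hence sz: "(\<Sum>u\<in>UNIV. x u) = 0" by (simp flip: sum_distrib_left)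
    have "in_image M (\<lambda>u. N * x u)" by (rule upper_all[OF allg sz])
    hence "in_image M (\<lambda>u. (2 ^ c * Od) * x u)" unfolding N_def .
    thus ?thesis by (rule combine[OF k _ oddO])
  qed
  have ordle: "coker_ord M x \<le> 2 ^ c" if "x \<in> sylow2_reps M" for x
  proof -
    have P: "(2::nat) ^ c > 0 \<and> in_image M (\<lambda>u. int (2 ^ c) * x u)" using up[OF that] by simp
    show ?thesis unfolding coker_ord_def using Least_le[where P="\<lambda>m. m > 0 \<and> in_image M (\<lambda>u. int m * x u)", OF P]
      by auto
  qed
  obtain t1 t2 where t12: "t1 \<noteq> t2" "t1 \<noteq> 0" "t2 \<noteq> 0"
    and key: "\<And>f1 f2 m. lam M t1 * f1 = -2 * (m * Od) \<Longrightarrow> lam M t2 * f2 = -2 * (m * Od) \<Longrightarrow> 4 dvd (f1 + f2) \<Longrightarrow> 2 ^ c dvd m"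
  proof (cases "Dn = Dm")
    case True
    have dt: "d t = Dm" if "t \<noteq> 0" for t using dle[OF that] True by simp
    have "\<not> inj_on (\<lambda>t. od t mod 4) A"
    proof
      assume inj: "inj_on (\<lambda>t. od t mod 4) A"
      have "(\<lambda>t. od t mod 4) ` A \<subseteq> {1, 3}"
      proof
        fix y assume "y \<in> (\<lambda>t. od t mod 4) ` A"
        then obtain t where t: "t \<in> A" "y = od t mod 4" by blast
        have "odd (od t)" using t(1) dec(2) by (auto simp: A_def)
        hence "od t mod 4 = 1 \<or> od t mod 4 = 3" by presburger
        thus "y \<in> {1, 3}" using t(2) by auto
      qed
      hence "card A \<le> card {1, 3::int}" using card_inj_on_le[OF inj] by blast
      moreover have "card A = 7" unfolding A_def by (simp add: card_Diff_singleton bit_UNIV numeral_eq_Suc)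
      ultimately show False by simp
    qed
    then obtain t1 t2 where tt: "t1 \<in> A" "t2 \<in> A" "t1 \<noteq> t2" "od t1 mod 4 = od t2 mod 4"
      unfolding inj_on_def by blast
    have t0: "t1 \<noteq> 0" "t2 \<noteq> 0" using tt by (auto simp: A_def)
    show ?thesis
    proof (rule that[OF tt(3) t0])
      fix f1 f2 m
      assume e1: "lam M t1 * f1 = -2 * (m * Od)" and e2: "lam M t2 * f2 = -2 * (m * Od)" and dv: "4 dvd (f1 + f2)"
      have "2 ^ Dm dvd m"
        by (rule nt_eq[OF _ _ dec(2)[OF t0(1)] dec(2)[OF t0(2)] oddO tt(4) e1 e2 dv])
           (use dec(1)[OF t0(1)] dec(1)[OF t0(2)] dt t0 in simp_all)
      thus "2 ^ c dvd m" unfolding c_def using True by simp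
    qed
  next
    case False
    have "Dm \<in> D" unfolding Dm_def using finD neD by simp
    then obtain t1 where t1: "t1 \<noteq> 0" "d t1 = Dm" unfolding D_def by blast
    have "Dn \<in> D" unfolding Dn_def using finD neD by simp
    then obtain t2 where t2: "t2 \<noteq> 0" "d t2 = Dn" unfolding D_def by blast
    have lt: "Dn < Dm" using False dle[OF t1(1)] by simp
    have ne: "t1 \<noteq> t2" using t1 t2 lt by auto
    show ?thesis
    proof (rule that[OF ne t1(1) t2(1)])
      fix f1 f2 m
      assume e1: "lam M t1 * f1 = -2 * (m * Od)" and e2: "lam M t2 * f2 = -2 * (m * Od)" and dv: "4 dvd (f1 + f2)"
      have "2 ^ (Dm + 1) dvd m"
        by (rule nt_uneq[OF _ _ dec(2)[OF t1(1)] dec(2)[OF t2(1)] oddO _ e1 e2 dv])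
           (use dec(1)[OF t1(1)] dec(1)[OF t2(1)] t1 t2 lt in simp_all)
      thus "2 ^ c dvd m" unfolding c_def using False by simp
    qed
  qed
  obtain g w where S: "{t. dotF2 t w = 1 \<and> dotF2 t g = 1} = {t1, t2}"
    using pair_exists[OF t12] by blast
  define x where "x u = Od * dlt g u" for u
  have imx: "in_image M (\<lambda>u. 2 ^ c * x u)"
    using allg[of g] unfolding x_def N_def by (simp add: mult.assoc)
  hence xr: "x \<in> sylow2_reps M" unfolding sylow2_reps_def by blast
  have ordx: "coker_ord M x = 2 ^ c"
  proof -
    have P: "(2::nat) ^ c > 0 \<and> in_image M (\<lambda>u. int (2 ^ c) * x u)" using imx by simp
    have "(LEAST m. m > 0 \<and> in_image M (\<lambda>u. int m * x u)) = 2 ^ c"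
    proof (rule Least_equality[where P="\<lambda>m. m > 0 \<and> in_image M (\<lambda>u. int m * x u)", OF P])
      fix m assume m: "0 < m \<and> in_image M (\<lambda>u. int m * x u)"
      have "in_image M (\<lambda>u. (int m * Od) * dlt g u)" using m unfolding x_def by (simp add: mult.assoc)
      then obtain f1 f2 where "lam M t1 * f1 = -2 * (int m * Od)" "lam M t2 * f2 = -2 * (int m * Od)" "4 dvd (f1 + f2)"
        using lower[OF nonzero lnz S t12(1)] by blast
      hence "2 ^ c dvd int m" using key by blast
      hence "int (2 ^ c) dvd int m" by simp
      hence "2 ^ c dvd m" by (simp only: of_nat_dvd_iff)
      thus "2 ^ c \<le> m" using m by (simp add: dvd_imp_le)
    qed
    moreover have "\<exists>m>0. in_image M (\<lambda>u. int m * x u)" using P by blast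
    ultimately show ?thesis unfolding coker_ord_def by simp
  qed
  have "sylow2_largest_cyclic M = 2 ^ c"
    unfolding sylow2_largest_cyclic_def
  proof (rule Max_eqI)
    show "finite (coker_ord M ` sylow2_reps M)"
      by (rule finite_subset[of _ "{..2 ^ c}"]) (use ordle in auto)
    show "y \<le> 2 ^ c" if "y \<in> coker_ord M ` sylow2_reps M" for y using that ordle by auto
    show "2 ^ c \<in> coker_ord M ` sylow2_reps M" using ordx xr by force
  qed
  hence "sylow2_largest_cyclic M = (if Min D = Max D then 2 ^ Max D else 2 ^ (Max D + 1))"
    unfolding c_def Dm_def Dn_def by simp
  thus ?thesis unfolding Let_def D_def d_def by simp
qed

end
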